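(* Let $a,b\ge1$ be integers with $|a-b|\le4$ and let $n=a+b+2$. Then $\operatorname{diam}(\mathcal{C}_3(S(a,b)))=\lfloor 3n/2\rfloor$.
   Context: The double star $S(a,b)$ is the tree obtained by joining the centers of the stars $K_{1,a}$ and $K_{1,b}$ by an edge; it has $a+b+2$ vertices. A proper 3-coloring of a tree $T=(V,E)$ is a map $f\colon V\to\mathbb{Z}/3\mathbb{Z}$ with $f(u)\neq f(v)$ for every edge $uv\in E$. The 3-coloring graph $\mathcal{C}_3(T)$ has the proper 3-colorings as vertices, two colorings adjacent iff they differ at exactly one vertex; $\operatorname{diam}$ denotes graph diameter. *)

theory Defs
  imports Main "HOL-Library.Extended_Nat"
begin

text \<open>A graph is given by a vertex set V and an edge predicate E (on V).
  Proper 3-colourings are maps V \<rightarrow> {0,1,2}; to make them unique as HOL functions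
  we require them to be 0 outside V.\<close>

definition proper_3col :: "'v set \<Rightarrow> ('v \<Rightarrow> 'v \<Rightarrow> bool) \<Rightarrow> ('v \<Rightarrow> nat) \<Rightarrow> bool" where
  "proper_3col V E f \<longleftrightarrow>
     (\<forall>v\<in>V. f v < 3) \<and> (\<forall>v. v \<notin> V \<longrightarrow> f v = 0) \<and>
     (\<forall>u\<in>V. \<forall>v\<in>V. E u v \<longrightarrow> f u \<noteq> f v)"

definition col_adj :: "'v set \<Rightarrow> ('v \<Rightarrow> 'v \<Rightarrow> bool) \<Rightarrow> ('v \<Rightarrow> nat) \<Rightarrow> ('v \<Rightarrow> nat) \<Rightarrow> bool" where
  "col_adj V E f g \<longleftrightarrow> proper_3col V E f \<and> proper_3col V E g \<and>
     card {v\<in>V. f v \<noteq> g v} = 1"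

definition col_walk :: "'v set \<Rightarrow> ('v \<Rightarrow> 'v \<Rightarrow> bool) \<Rightarrow> ('v \<Rightarrow> nat) list \<Rightarrow> bool" where
  "col_walk V E ps \<longleftrightarrow> ps \<noteq> [] \<and> (\<forall>i. Suc i < length ps \<longrightarrow> col_adj V E (ps ! i) (ps ! Suc i))
      \<and> (\<forall>p\<in>set ps. proper_3col V E p)"

text \<open>Graph distance in the 3-colouring graph (\<infinity> if not connected).\<close>
definition col_dist :: "'v set \<Rightarrow> ('v \<Rightarrow> 'v \<Rightarrow> bool) \<Rightarrow> ('v \<Rightarrow> nat) \<Rightarrow> ('v \<Rightarrow> nat) \<Rightarrow> enat" where
  "col_dist V E f g = (INF ps \<in> {ps. col_walk V E ps \<and> hd ps = f \<and> last ps = g}.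
                          enat (length ps - 1))"

definition col_diam :: "'v set \<Rightarrow> ('v \<Rightarrow> 'v \<Rightarrow> bool) \<Rightarrow> enat" where
  "col_diam V E = (SUP p \<in> {(f, g). proper_3col V E f \<and> proper_3col V E g}.
                      col_dist V E (fst p) (snd p))"

text \<open>Double star S(a,b) on vertices {0,...,a+b+1}: centres 0 and 1 joined by an edge;
  leaves 2..a+1 attached to 0, leaves a+2..a+b+1 attached to 1.\<close>
definition dstar_V :: "nat \<Rightarrow> nat \<Rightarrow> nat set" where
  "dstar_V a b = {0..a+b+1}"

definition dstar_E0 :: "nat \<Rightarrow> nat \<Rightarrow> nat \<Rightarrow> nat \<Rightarrow> bool" where
  "dstar_E0 a b u v \<longleftrightarrow> (u = 0 \<and> v = 1) \<or> (u = 0 \<and> 2 \<le> v \<and> v \<le> a + 1)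
      \<or> (u = 1 \<and> a + 2 \<le> v \<and> v \<le> a + b + 1)"

definition dstar_E :: "nat \<Rightarrow> nat \<Rightarrow> nat \<Rightarrow> nat \<Rightarrow> bool" where
  "dstar_E a b u v \<longleftrightarrow> dstar_E0 a b u v \<or> dstar_E0 a b v u"

end

theory Submission
  imports Defs
begin

definition validc :: "nat \<times> nat \<Rightarrow> bool" where
  "validc c \<longleftrightarrow> fst c < 3 \<and> snd c < 3 \<and> fst c \<noteq> snd c"

lemma lt3: "(s::nat) < 3 \<Longrightarrow> s = 0 \<or> s = 1 \<or> s = 2" by auto

lemma validc_cases: "validc c \<Longrightarrow> c = (0,1) \<or> c = (0,2) \<or> c = (1,0) \<or> c = (1,2) \<or> c = (2,0) \<or> c = (2,1)"
  by (cases c) (auto simp: validc_def less_Suc_eq numeral_eq_Suc)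

definition nxt :: "nat \<times> nat \<Rightarrow> nat \<times> nat" where
  "nxt c = (if (snd c + 3 - fst c) mod 3 = 1 then (fst c, 3 - fst c - snd c) else (3 - fst c - snd c, snd c))"
definition prv :: "nat \<times> nat \<Rightarrow> nat \<times> nat" where
  "prv c = (if (snd c + 3 - fst c) mod 3 = 1 then (3 - fst c - snd c, snd c) else (fst c, 3 - fst c - snd c))"
definition pos :: "nat \<times> nat \<Rightarrow> nat" where
  "pos c = (if c = (0,1) then 0 else if c = (0,2) then 1 else if c = (1,2) then 2 else
            if c = (1,0) then 3 else if c = (2,0) then 4 else 5)"

fun itN :: "nat \<Rightarrow> nat \<times> nat \<Rightarrow> (nat \<times> nat) list" where
  "itN 0 c = [c]" | "itN (Suc k) c = c # itN k (nxt c)"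
fun itP :: "nat \<Rightarrow> nat \<times> nat \<Rightarrow> (nat \<times> nat) list" where
  "itP 0 c = [c]" | "itP (Suc k) c = c # itP k (prv c)"

definition pN :: "nat \<times> nat \<Rightarrow> nat \<times> nat \<Rightarrow> (nat \<times> nat) list" where
  "pN c T = itN ((pos T + 6 - pos c) mod 6) c"
definition pP :: "nat \<times> nat \<Rightarrow> nat \<times> nat \<Rightarrow> (nat \<times> nat) list" where
  "pP c T = itP ((pos c + 6 - pos T) mod 6) c"

fun lcA :: "(nat \<times> nat) list \<Rightarrow> nat \<Rightarrow> nat \<Rightarrow> nat" where
  "lcA [] s t = 0"
| "lcA [c] s t = (if s = t then 0 else 1)"
| "lcA (c0 # c1 # r) s t = (if fst c0 = fst c1 then lcA (c1 # r) s t
      else (if s = snd c0 then 0 else 1) + lcA (c1 # r) (snd c0) t)"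
fun lcB :: "(nat \<times> nat) list \<Rightarrow> nat \<Rightarrow> nat \<Rightarrow> nat" where
  "lcB [] s t = 0"
| "lcB [c] s t = (if s = t then 0 else 1)"
| "lcB (c0 # c1 # r) s t = (if snd c0 = snd c1 then lcB (c1 # r) s t
      else (if s = fst c0 then 0 else 1) + lcB (c1 # r) (fst c0) t)"

definition adjc :: "nat \<times> nat \<Rightarrow> nat \<times> nat \<Rightarrow> bool" where
  "adjc c d \<longleftrightarrow> d = nxt c \<or> d = prv c"

fun cw :: "(nat \<times> nat) list \<Rightarrow> bool" where
  "cw [] = False" | "cw [c] = validc c" | "cw (c0 # c1 # r) = (validc c0 \<and> adjc c0 c1 \<and> cw (c1 # r))"

lemma itN_num[simp]: "itN (numeral n) c = c # itN (pred_numeral n) (nxt c)" by (simp add: numeral_eq_Suc)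
lemma itP_num[simp]: "itP (numeral n) c = c # itP (pred_numeral n) (prv c)" by (simp add: numeral_eq_Suc)

lemmas fin_simps = nxt_def prv_def pos_def pN_def pP_def validc_def adjc_def

lemma nxt_valid: "validc c \<Longrightarrow> validc (nxt c) \<and> prv (nxt c) = c"
  apply (drule validc_cases) apply (elim disjE) by (simp_all add: fin_simps)
lemma prv_valid: "validc c \<Longrightarrow> validc (prv c) \<and> nxt (prv c) = c"
  apply (drule validc_cases) apply (elim disjE) by (simp_all add: fin_simps)

lemma adjc_cases: "validc c \<Longrightarrow> adjc c d \<Longrightarrow> validc d \<and>
   ((fst d \<noteq> fst c \<and> snd d = snd c) \<or> (fst d = fst c \<and> snd d \<noteq> snd c))"
  unfolding adjc_def apply (drule validc_cases) apply (elim disjE) by (simp_all add: fin_simps)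

lemma move_adjc: "validc c \<Longrightarrow> validc d \<Longrightarrow> (fst d \<noteq> fst c \<and> snd d = snd c) \<or> (fst d = fst c \<and> snd d \<noteq> snd c) \<Longrightarrow> adjc c d"
  apply (drule validc_cases, drule validc_cases) apply (elim disjE) by (simp_all add: fin_simps)

lemma pN_step: "validc c \<Longrightarrow> validc T \<Longrightarrow> c \<noteq> T \<Longrightarrow> pN c T = c # pN (nxt c) T"
  apply (drule validc_cases, drule validc_cases) apply (elim disjE) by (simp_all add: fin_simps)
lemma pP_step: "validc c \<Longrightarrow> validc T \<Longrightarrow> c \<noteq> T \<Longrightarrow> pP c T = c # pP (prv c) T"
  apply (drule validc_cases, drule validc_cases) apply (elim disjE) by (simp_all add: fin_simps)
lemma pN_same: "pN T T = [T]" by (simp add: pN_def)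
lemma pP_same: "pP T T = [T]" by (simp add: pP_def)

lemma pN_props: "validc c \<Longrightarrow> validc T \<Longrightarrow> cw (pN c T) \<and> hd (pN c T) = c \<and> last (pN c T) = T"
  apply (drule validc_cases, drule validc_cases) apply (elim disjE) by (simp_all add: fin_simps)
lemma pP_props: "validc c \<Longrightarrow> validc T \<Longrightarrow> cw (pP c T) \<and> hd (pP c T) = c \<and> last (pP c T) = T"
  apply (drule validc_cases, drule validc_cases) apply (elim disjE) by (simp_all add: fin_simps)

lemma lcA_skip: "validc c \<Longrightarrow> adjc c d \<Longrightarrow> s < 3 \<Longrightarrow> s \<noteq> fst c \<Longrightarrow> s \<noteq> fst d \<Longrightarrow> lcA (c # d # r) s t = lcA (d # r) s t"
  unfolding adjc_def apply (drule validc_cases, drule lt3) apply (elim disjE) by (simp_all add: fin_simps)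
lemma lcB_skip: "validc c \<Longrightarrow> adjc c d \<Longrightarrow> s < 3 \<Longrightarrow> s \<noteq> snd c \<Longrightarrow> s \<noteq> snd d \<Longrightarrow> lcB (c # d # r) s t = lcB (d # r) s t"
  unfolding adjc_def apply (drule validc_cases, drule lt3) apply (elim disjE) by (simp_all add: fin_simps)

lemma ub3: "validc c \<Longrightarrow> validc T \<Longrightarrow> c \<noteq> T \<Longrightarrow> nxt c \<noteq> T \<Longrightarrow> prv c \<noteq> T \<Longrightarrow>
  s < 3 \<Longrightarrow> t < 3 \<Longrightarrow> s \<noteq> fst c \<Longrightarrow> t \<noteq> fst T \<Longrightarrow> lcA (pN c T) s t + lcA (pP c T) s t \<le> 3"
  apply (drule validc_cases, drule validc_cases, drule lt3, drule lt3) apply (elim disjE) by (simp_all add: fin_simps)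
lemma ub3B: "validc c \<Longrightarrow> validc T \<Longrightarrow> c \<noteq> T \<Longrightarrow> nxt c \<noteq> T \<Longrightarrow> prv c \<noteq> T \<Longrightarrow>
  s < 3 \<Longrightarrow> t < 3 \<Longrightarrow> s \<noteq> snd c \<Longrightarrow> t \<noteq> snd T \<Longrightarrow> lcB (pN c T) s t + lcB (pP c T) s t \<le> 3"
  apply (drule validc_cases, drule validc_cases, drule lt3, drule lt3) apply (elim disjE) by (simp_all add: fin_simps)
lemma ub3len: "validc c \<Longrightarrow> validc T \<Longrightarrow> c \<noteq> T \<Longrightarrow> nxt c \<noteq> T \<Longrightarrow> prv c \<noteq> T \<Longrightarrow>
  length (pN c T) + length (pP c T) = 8"
  apply (drule validc_cases, drule validc_cases) apply (elim disjE) by (simp_all add: fin_simps)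
lemma ub1N: "validc c \<Longrightarrow> validc T \<Longrightarrow> c \<noteq> T \<Longrightarrow> nxt c = T \<Longrightarrow> pN c T = [c, T]"
  apply (drule validc_cases, drule validc_cases) apply (elim disjE) by (simp_all add: fin_simps)
lemma ub1P: "validc c \<Longrightarrow> validc T \<Longrightarrow> c \<noteq> T \<Longrightarrow> prv c = T \<Longrightarrow> pP c T = [c, T]"
  apply (drule validc_cases, drule validc_cases) apply (elim disjE) by (simp_all add: fin_simps)

context fixes a b :: nat begin

abbreviation "VV \<equiv> dstar_V a b"
abbreviation "EE \<equiv> dstar_E a b"
abbreviation "PR h \<equiv> proper_3col VV EE h"

lemma E_iff: "dstar_E a b u v \<longleftrightarrow> (u=0 \<and> v=1) \<or> (u=1 \<and> v=0) \<or> (u=0 \<and> 2\<le>v \<and> v\<le>a+1) \<or> (v=0 \<and> 2\<le>u \<and> u\<le>a+1)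
   \<or> (u=1 \<and> a+2\<le>v \<and> v\<le>a+b+1) \<or> (v=1 \<and> a+2\<le>u \<and> u\<le>a+b+1)"
  unfolding dstar_E_def dstar_E0_def by auto

lemma proper_iff: "PR h \<longleftrightarrow> (\<forall>v. v \<le> a+b+1 \<longrightarrow> h v < 3) \<and> (\<forall>v. a+b+1 < v \<longrightarrow> h v = 0) \<and> h 0 \<noteq> h 1
   \<and> (\<forall>v. 2 \<le> v \<and> v \<le> a+1 \<longrightarrow> h v \<noteq> h 0) \<and> (\<forall>v. a+2 \<le> v \<and> v \<le> a+b+1 \<longrightarrow> h v \<noteq> h 1)"
  (is "?L \<longleftrightarrow> ?R")
proof
  assume L: ?L
  have c3: "\<forall>v\<in>VV. h v < 3" and c0: "\<forall>v. v \<notin> VV \<longrightarrow> h v = 0"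
    and ce: "\<And>u v. u \<in> VV \<Longrightarrow> v \<in> VV \<Longrightarrow> EE u v \<Longrightarrow> h u \<noteq> h v"
    using L unfolding proper_3col_def by auto
  have V: "\<And>v. v \<in> VV \<longleftrightarrow> v \<le> a+b+1" by (simp add: dstar_V_def)
  show ?R
  proof (intro conjI allI impI)
    fix v assume "v \<le> a+b+1" then show "h v < 3" using c3 V by blast
  next
    fix v assume "a+b+1 < v" then show "h v = 0" using c0 V by auto
  next
    show "h 0 \<noteq> h 1" by (rule ce) (auto simp: V E_iff)
  next
    fix v assume "2 \<le> v \<and> v \<le> a+1" then show "h v \<noteq> h 0"
      using ce[of v 0] by (auto simp: V E_iff)
  next
    fix v assume "a+2 \<le> v \<and> v \<le> a+b+1" then show "h v \<noteq> h 1"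
      using ce[of v 1] by (auto simp: V E_iff)
  qed
next
  assume R: ?R
  show ?L unfolding proper_3col_def
  proof (intro conjI ballI allI impI)
    fix v assume "v \<in> VV" then show "h v < 3" using R by (auto simp: dstar_V_def)
  next
    fix v assume "v \<notin> VV" then show "h v = 0" using R by (auto simp: dstar_V_def)
  next
    fix u v assume "u \<in> VV" "v \<in> VV" "EE u v"
    then show "h u \<noteq> h v" using R unfolding E_iff by (elim disjE) auto
  qed
qed

definition reach :: "(nat \<Rightarrow> nat) \<Rightarrow> (nat \<Rightarrow> nat) \<Rightarrow> nat \<Rightarrow> bool" where
  "reach h h' k \<longleftrightarrow> (\<exists>ps. col_walk VV EE ps \<and> hd ps = h \<and> last ps = h' \<and> length ps = Suc k)"

lemma reach_refl: "PR h \<Longrightarrow> reach h h 0"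
  unfolding reach_def col_walk_def by (rule exI[of _ "[h]"]) auto

lemma reach_step: "col_adj VV EE h h1 \<Longrightarrow> reach h1 h' k \<Longrightarrow> reach h h' (Suc k)"
  unfolding reach_def
proof -
  assume adj: "col_adj VV EE h h1" and "\<exists>ps. col_walk VV EE ps \<and> hd ps = h1 \<and> last ps = h' \<and> length ps = Suc k"
  then obtain ps where ps: "col_walk VV EE ps" "hd ps = h1" "last ps = h'" "length ps = Suc k" by blast
  have "col_walk VV EE (h # ps)"
    unfolding col_walk_def
  proof (intro conjI allI impI)
    fix i assume i: "Suc i < length (h # ps)"
    show "col_adj VV EE ((h # ps) ! i) ((h # ps) ! Suc i)"
    proof (cases i)
      case 0 then show ?thesis using adj ps by (cases ps) auto
    next
      case (Suc j) then show ?thesis using ps i unfolding col_walk_def by auto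
    qed
  next
    show "\<forall>p\<in>set (h # ps). proper_3col VV EE p" using adj ps unfolding col_walk_def col_adj_def by auto
  qed simp
  then show "\<exists>ps. col_walk VV EE ps \<and> hd ps = h \<and> last ps = h' \<and> length ps = Suc (Suc k)"
    using ps by (intro exI[of _ "h # ps"]) (cases ps; auto)
qed

lemma dist_le: "reach h h' k \<Longrightarrow> col_dist VV EE h h' \<le> enat k"
  unfolding reach_def col_dist_def
  by (auto intro!: INF_lower2)

lemma adj_single: "PR h \<Longrightarrow> PR h' \<Longrightarrow> v \<in> VV \<Longrightarrow> (\<forall>u. u \<noteq> v \<longrightarrow> h u = h' u) \<Longrightarrow> h v \<noteq> h' v \<Longrightarrow> col_adj VV EE h h'"
  unfolding col_adj_def
proof (intro conjI)
  assume "v \<in> VV" "\<forall>u. u \<noteq> v \<longrightarrow> h u = h' u" "h v \<noteq> h' v"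
  then have "{u\<in>VV. h u \<noteq> h' u} = {v}" by auto
  then show "card {u\<in>VV. h u \<noteq> h' u} = 1" by simp
qed

lemma properD: assumes "PR h" shows "\<forall>v. v \<le> a+b+1 \<longrightarrow> h v < 3" "\<forall>v. a+b+1 < v \<longrightarrow> h v = 0" "h 0 \<noteq> h 1"
   "\<forall>v. 2 \<le> v \<and> v \<le> a+1 \<longrightarrow> h v \<noteq> h 0" "\<forall>v. a+2 \<le> v \<and> v \<le> a+b+1 \<longrightarrow> h v \<noteq> h 1"
  using assms[unfolded proper_iff] by blast+

lemma finite_diff: "PR h \<Longrightarrow> PR h1 \<Longrightarrow> finite {v. h v \<noteq> h1 v}"
proof (rule finite_subset)
  assume "PR h" "PR h1"
  then have z: "\<forall>v. a+b+1 < v \<longrightarrow> h v = 0" "\<forall>v. a+b+1 < v \<longrightarrow> h1 v = 0" by (simp_all add: properD)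
  show "{v. h v \<noteq> h1 v} \<subseteq> {0..a+b+1}"
  proof
    fix v assume "v \<in> {v. h v \<noteq> h1 v}"
    then have "h v \<noteq> h1 v" by simp
    then have "\<not> a+b+1 < v" using z by auto
    then show "v \<in> {0..a+b+1}" by simp
  qed
qed simp

lemma leafchange: "\<forall>h. PR h \<longrightarrow> PR h1 \<longrightarrow> h 0 = h1 0 \<longrightarrow> h 1 = h1 1 \<longrightarrow> card {v. h v \<noteq> h1 v} = k
   \<longrightarrow> reach h1 g K \<longrightarrow> reach h g (k + K)"
proof (induction k)
  case 0
  show ?case
  proof (intro allI impI)
    fix h assume h: "PR h" "PR h1" "card {v. h v \<noteq> h1 v} = 0" "reach h1 g K"
    have "{v. h v \<noteq> h1 v} = {}" using h(3) finite_diff[OF h(1,2)] by simp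
    then have "\<forall>v. h v = h1 v" by blast
    then have "h = h1" by (intro ext) blast
    then show "reach h g (0 + K)" using h(4) by simp
  qed
next
  case (Suc k)
  show ?case
  proof (intro allI impI)
    fix h assume h: "PR h" "PR h1" "h 0 = h1 0" "h 1 = h1 1" "card {v. h v \<noteq> h1 v} = Suc k" "reach h1 g K"
    have fin: "finite {v. h v \<noteq> h1 v}" by (rule finite_diff[OF h(1,2)])
    have "{v. h v \<noteq> h1 v} \<noteq> {}" using h(5) by (metis card.empty nat.distinct(1))
    then obtain v where v: "h v \<noteq> h1 v" by blast
    define h2 where "h2 = h(v := h1 v)"
    have v01: "v \<noteq> 0" "v \<noteq> 1" using v h(3,4) by metis+
    have vV: "v \<le> a+b+1"
    proof (rule ccontr)
      assume "\<not> v \<le> a+b+1"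
      then have "h v = 0" "h1 v = 0" using properD(2)[OF h(1)] properD(2)[OF h(2)] by auto
      then show False using v by simp
    qed
    have p2: "PR h2" unfolding proper_iff
    proof (intro conjI allI impI)
      fix u
      show "u \<le> a+b+1 \<Longrightarrow> h2 u < 3" using properD[OF h(1)] properD[OF h(2)] by (cases "u = v") (simp_all add: h2_def)
      show "a+b+1 < u \<Longrightarrow> h2 u = 0" using properD[OF h(1)] properD[OF h(2)] by (cases "u = v") (simp_all add: h2_def)
      show "2 \<le> u \<and> u \<le> a+1 \<Longrightarrow> h2 u \<noteq> h2 0" using properD[OF h(1)] properD[OF h(2)] h(3) v01 by (cases "u = v") (simp_all add: h2_def)
      show "a+2 \<le> u \<and> u \<le> a+b+1 \<Longrightarrow> h2 u \<noteq> h2 1" using properD[OF h(1)] properD[OF h(2)] h(4) v01 by (cases "u = v") (simp_all add: h2_def)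
    next
      show "h2 0 \<noteq> h2 1" using properD[OF h(1)] v01 by (simp add: h2_def)
    qed
    have adj: "col_adj VV EE h h2"
      by (rule adj_single[OF h(1) p2, of v]) (use vV v in \<open>auto simp: h2_def dstar_V_def\<close>)
    have "{u. h2 u \<noteq> h1 u} = {u. h u \<noteq> h1 u} - {v}" by (auto simp: h2_def)
    then have ck: "card {u. h2 u \<noteq> h1 u} = k" using h(5) fin v by simp
    have e0: "h2 0 = h1 0" "h2 1 = h1 1" using v01 h(3,4) by (auto simp: h2_def)
    have "reach h2 g (k + K)" using Suc.IH p2 h(2) e0 ck h(6) by blast
    then show "reach h g (Suc k + K)" using reach_step[OF adj] by simp
  qed
qed

end

lemma card_sum_ind: "finite A \<Longrightarrow> card {v\<in>A. P v} = (\<Sum>v\<in>A. if P v then 1 else 0)"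
  by (simp add: sum.inter_filter[symmetric])

lemma card_sum_neq: "finite A \<Longrightarrow> card {v\<in>A. f v \<noteq> c v} = (\<Sum>v\<in>A. if f v = c v then 0 else 1)"
  by (simp add: card_sum_ind) (rule sum.cong; auto)

lemma lcA_lip: "lcA cs s t \<le> lcA cs s' t + 1"
  by (induction cs s t arbitrary: s' rule: lcA.induct) auto
lemma lcB_lip: "lcB cs s t \<le> lcB cs s' t + 1"
  by (induction cs s t arbitrary: s' rule: lcB.induct) auto
lemma lcA_ge: "cs \<noteq> [] \<Longrightarrow> lcA [c] s t \<le> lcA cs s t"
  by (induction cs s t rule: lcA.induct) auto
lemma lcB_ge: "cs \<noteq> [] \<Longrightarrow> lcB [c] s t \<le> lcB cs s t"
  by (induction cs s t rule: lcB.induct) auto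

lemma sum_change: "finite S \<Longrightarrow> (\<forall>u\<in>S. u \<noteq> v \<longrightarrow> F u = G u) \<Longrightarrow> F v \<le> G v + 1 \<Longrightarrow>
   sum F S \<le> sum G S + (if v \<in> S then 1 else (0::nat))"
proof (cases "v \<in> S")
  case True
  assume fin: "finite S" and eq: "\<forall>u\<in>S. u \<noteq> v \<longrightarrow> F u = G u" and le: "F v \<le> G v + 1"
  have "sum F S = F v + sum F (S - {v})" using True fin by (simp add: sum.remove)
  also have "sum F (S - {v}) = sum G (S - {v})" using eq by (intro sum.cong) auto
  also have "sum G S = G v + sum G (S - {v})" using True fin by (simp add: sum.remove)
  ultimately show ?thesis using le True by simp
next
  case False
  assume "finite S" "\<forall>u\<in>S. u \<noteq> v \<longrightarrow> F u = G u"
  then have "sum F S = sum G S" using False by (intro sum.cong) auto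
  then show ?thesis using False by simp
qed

context fixes a b :: nat begin

abbreviation "AA \<equiv> {2..a+1}"
abbreviation "BB \<equiv> {a+2..a+b+1}"

definition Cost :: "(nat \<Rightarrow> nat) \<Rightarrow> (nat \<Rightarrow> nat) \<Rightarrow> (nat \<times> nat) list \<Rightarrow> nat" where
  "Cost g h cs = (length cs - 1) + (\<Sum>v\<in>AA. lcA cs (h v) (g v)) + (\<Sum>v\<in>BB. lcB cs (h v) (g v))"

definition cen :: "(nat \<Rightarrow> nat) \<Rightarrow> nat \<times> nat" where "cen h = (h 0, h 1)"

definition Phi :: "(nat \<Rightarrow> nat) \<Rightarrow> (nat \<Rightarrow> nat) \<Rightarrow> nat" where
  "Phi g h = min (Cost g h (pN (cen h) (cen g))) (Cost g h (pP (cen h) (cen g)))"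

lemma proper_intro: "(\<forall>v. v \<le> a+b+1 \<longrightarrow> h v < 3) \<Longrightarrow> (\<forall>v. a+b+1 < v \<longrightarrow> h v = 0) \<Longrightarrow> h 0 \<noteq> h 1
   \<Longrightarrow> (\<forall>v. 2 \<le> v \<and> v \<le> a+1 \<longrightarrow> h v \<noteq> h 0) \<Longrightarrow> (\<forall>v. a+2 \<le> v \<and> v \<le> a+b+1 \<longrightarrow> h v \<noteq> h 1) \<Longrightarrow> PR a b h"
  by (simp add: proper_iff)

lemma cen_valid: "PR a b h \<Longrightarrow> validc (cen h)"
  unfolding cen_def validc_def using properD[of a b h] by simp

lemma realize: "cw cs \<Longrightarrow> PR a b h \<Longrightarrow> PR a b g \<Longrightarrow> hd cs = cen h \<Longrightarrow> last cs = cen g \<Longrightarrow>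
   \<exists>k \<le> Cost g h cs. reach a b h g k"
proof (induction cs arbitrary: h rule: cw.induct)
  case 1 then show ?case by simp
next
  case (2 c)
  then have c0: "h 0 = g 0" "h 1 = g 1" by (auto simp: cen_def)
  have sub: "{v. h v \<noteq> g v} \<subseteq> {v\<in>AA. h v \<noteq> g v} \<union> {v\<in>BB. h v \<noteq> g v}"
  proof
    fix v assume "v \<in> {v. h v \<noteq> g v}"
    then have "h v \<noteq> g v" by simp
    moreover have "v \<le> a+b+1" using properD(2)[OF 2(2)] properD(2)[OF 2(3)] \<open>h v \<noteq> g v\<close> by (metis not_le)
    moreover have "v \<noteq> 0" "v \<noteq> 1" using c0 \<open>h v \<noteq> g v\<close> by metis+
    ultimately show "v \<in> {v\<in>AA. h v \<noteq> g v} \<union> {v\<in>BB. h v \<noteq> g v}" by auto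
  qed
  have "card {v. h v \<noteq> g v} \<le> card ({v\<in>AA. h v \<noteq> g v} \<union> {v\<in>BB. h v \<noteq> g v})"
    by (rule card_mono[OF _ sub]) auto
  also have "\<dots> \<le> card {v\<in>AA. h v \<noteq> g v} + card {v\<in>BB. h v \<noteq> g v}" by (rule card_Un_le)
  also have "\<dots> = Cost g h [c]"
  proof -
    have "card {v\<in>AA. h v \<noteq> g v} = (\<Sum>v\<in>AA. if h v = g v then 0 else 1)" by (rule card_sum_neq) simp
    moreover have "card {v\<in>BB. h v \<noteq> g v} = (\<Sum>v\<in>BB. if h v = g v then 0 else 1)" by (rule card_sum_neq) simp
    ultimately show ?thesis unfolding Cost_def by (simp only: lcA.simps lcB.simps list.size)
  qed
  finally have le: "card {v. h v \<noteq> g v} \<le> Cost g h [c]" .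
  have "reach a b h g (card {v. h v \<noteq> g v} + 0)"
    using leafchange[of a b g "card {v. h v \<noteq> g v}" g 0] reach_refl[of a b g] 2 c0 by blast
  then show ?case using le by auto
next
  case (3 c0 c1 r)
  then have v0: "validc c0" and ad: "adjc c0 c1" and cwr: "cw (c1 # r)" by auto
  have hc: "h 0 = fst c0" "h 1 = snd c0" using 3(5) by (auto simp: cen_def)
  from adjc_cases[OF v0 ad] have v1: "validc c1" and
    mv: "(fst c1 \<noteq> fst c0 \<and> snd c1 = snd c0) \<or> (fst c1 = fst c0 \<and> snd c1 \<noteq> snd c0)" by auto
  have lastr: "last (c1 # r) = cen g" using 3(6) by simp
  from mv show ?case
  proof
    assume xm: "fst c1 \<noteq> fst c0 \<and> snd c1 = snd c0"
    define h1 where "h1 = (\<lambda>v. if 2 \<le> v \<and> v \<le> a+1 then snd c0 else h v)"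
    define h2 where "h2 = h1(0 := fst c1)"
    have P: "\<forall>v. v \<le> a+b+1 \<longrightarrow> h v < 3" "\<forall>v. a+b+1 < v \<longrightarrow> h v = 0" "h 0 \<noteq> h 1"
   "\<forall>v. 2 \<le> v \<and> v \<le> a+1 \<longrightarrow> h v \<noteq> h 0" "\<forall>v. a+2 \<le> v \<and> v \<le> a+b+1 \<longrightarrow> h v \<noteq> h 1"
      using properD[OF 3(3)] by blast+
    have p1: "PR a b h1" apply (rule proper_intro) using P v0 hc by (auto simp: h1_def validc_def)
    have p2: "PR a b h2" apply (rule proper_intro) using P v0 v1 hc xm by (auto simp: h1_def h2_def validc_def)
    have adj: "col_adj (dstar_V a b) (dstar_E a b) h1 h2"
      by (rule adj_single[OF p1 p2, of 0]) (use xm hc in \<open>auto simp: h1_def h2_def dstar_V_def\<close>)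
    have ch2: "cen h2 = c1" using xm hc by (auto simp: cen_def h1_def h2_def prod_eq_iff)
    obtain K where K: "K \<le> Cost g h2 (c1 # r)" "reach a b h2 g K"
      using 3(1)[OF cwr p2 3(4) _ lastr] ch2 by auto
    have r1: "reach a b h1 g (Suc K)" by (rule reach_step[OF adj K(2)])
    have "{v. h v \<noteq> h1 v} = {v\<in>AA. h v \<noteq> snd c0}" by (auto simp: h1_def)
    moreover have "card {v\<in>AA. h v \<noteq> snd c0} = (\<Sum>v\<in>AA. if h v = snd c0 then 0 else 1)"
      by (rule card_sum_neq[where c="\<lambda>_. snd c0", simplified]) simp
    ultimately have cd: "card {v. h v \<noteq> h1 v} = (\<Sum>v\<in>AA. if h v = snd c0 then 0 else 1)" by simp
    have r2: "reach a b h g (card {v. h v \<noteq> h1 v} + Suc K)"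
      using leafchange[of a b h1 "card {v. h v \<noteq> h1 v}" g "Suc K"] 3(3) p1 r1 hc
      by (auto simp: h1_def)
    have sA: "(\<Sum>v\<in>AA. lcA (c0 # c1 # r) (h v) (g v)) = (\<Sum>v\<in>AA. (if h v = snd c0 then 0 else 1)) + (\<Sum>v\<in>AA. lcA (c1 # r) (h2 v) (g v))"
      using xm by (simp add: sum.distrib[symmetric] h2_def h1_def)
    have sB: "(\<Sum>v\<in>BB. lcB (c0 # c1 # r) (h v) (g v)) = (\<Sum>v\<in>BB. lcB (c1 # r) (h2 v) (g v))"
      using xm by (intro sum.cong) (auto simp: h2_def h1_def)
    have "Cost g h (c0 # c1 # r) = card {v. h v \<noteq> h1 v} + Suc (Cost g h2 (c1 # r))"
      unfolding Cost_def sA sB cd by simp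
    then show ?thesis using r2 K by (intro exI[of _ "card {v. h v \<noteq> h1 v} + Suc K"]) auto
  next
    assume ym: "fst c1 = fst c0 \<and> snd c1 \<noteq> snd c0"
    define h1 where "h1 = (\<lambda>v. if a+2 \<le> v \<and> v \<le> a+b+1 then fst c0 else h v)"
    define h2 where "h2 = h1(1 := snd c1)"
    have P: "\<forall>v. v \<le> a+b+1 \<longrightarrow> h v < 3" "\<forall>v. a+b+1 < v \<longrightarrow> h v = 0" "h 0 \<noteq> h 1"
   "\<forall>v. 2 \<le> v \<and> v \<le> a+1 \<longrightarrow> h v \<noteq> h 0" "\<forall>v. a+2 \<le> v \<and> v \<le> a+b+1 \<longrightarrow> h v \<noteq> h 1"
      using properD[OF 3(3)] by blast+
    have p1: "PR a b h1" apply (rule proper_intro) using P v0 hc by (auto simp: h1_def validc_def)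
    have p2: "PR a b h2" apply (rule proper_intro) using P v0 v1 hc ym by (auto simp: h1_def h2_def validc_def)
    have adj: "col_adj (dstar_V a b) (dstar_E a b) h1 h2"
      by (rule adj_single[OF p1 p2, of 1]) (use ym hc in \<open>auto simp: h1_def h2_def dstar_V_def\<close>)
    have ch2: "cen h2 = c1" using ym hc by (auto simp: cen_def h1_def h2_def prod_eq_iff)
    obtain K where K: "K \<le> Cost g h2 (c1 # r)" "reach a b h2 g K"
      using 3(1)[OF cwr p2 3(4) _ lastr] ch2 by auto
    have r1: "reach a b h1 g (Suc K)" by (rule reach_step[OF adj K(2)])
    have "{v. h v \<noteq> h1 v} = {v\<in>BB. h v \<noteq> fst c0}" by (auto simp: h1_def)
    moreover have "card {v\<in>BB. h v \<noteq> fst c0} = (\<Sum>v\<in>BB. if h v = fst c0 then 0 else 1)"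
      by (rule card_sum_neq[where c="\<lambda>_. fst c0", simplified]) simp
    ultimately have cd: "card {v. h v \<noteq> h1 v} = (\<Sum>v\<in>BB. if h v = fst c0 then 0 else 1)" by simp
    have r2: "reach a b h g (card {v. h v \<noteq> h1 v} + Suc K)"
      using leafchange[of a b h1 "card {v. h v \<noteq> h1 v}" g "Suc K"] 3(3) p1 r1 hc
      by (auto simp: h1_def)
    have sB: "(\<Sum>v\<in>BB. lcB (c0 # c1 # r) (h v) (g v)) = (\<Sum>v\<in>BB. (if h v = fst c0 then 0 else 1)) + (\<Sum>v\<in>BB. lcB (c1 # r) (h2 v) (g v))"
      using ym by (simp add: sum.distrib[symmetric] h2_def h1_def)
    have sA: "(\<Sum>v\<in>AA. lcA (c0 # c1 # r) (h v) (g v)) = (\<Sum>v\<in>AA. lcA (c1 # r) (h2 v) (g v))"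
      using ym by (intro sum.cong) (auto simp: h2_def h1_def)
    have "Cost g h (c0 # c1 # r) = card {v. h v \<noteq> h1 v} + Suc (Cost g h2 (c1 # r))"
      unfolding Cost_def sA sB cd by simp
    then show ?thesis using r2 K by (intro exI[of _ "card {v. h v \<noteq> h1 v} + Suc K"]) auto
  qed
qed

end

context fixes a b :: nat begin

lemma cost_leaf: assumes "\<forall>u. u \<noteq> v \<longrightarrow> h u = h' u"
  shows "Cost a b g h cs \<le> Suc (Cost a b g h' cs)"
proof -
  have sA: "(\<Sum>u\<in>AA a. lcA cs (h u) (g u)) \<le> (\<Sum>u\<in>AA a. lcA cs (h' u) (g u)) + (if v \<in> AA a then 1 else 0)"
    by (rule sum_change) (use assms lcA_lip in auto)
  have sB: "(\<Sum>u\<in>BB a b. lcB cs (h u) (g u)) \<le> (\<Sum>u\<in>BB a b. lcB cs (h' u) (g u)) + (if v \<in> BB a b then 1 else 0)"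
    by (rule sum_change) (use assms lcB_lip in auto)
  have "(if v \<in> AA a then 1 else 0) + (if v \<in> BB a b then 1 else 0) \<le> (1::nat)" by auto
  then show ?thesis using sA sB unfolding Cost_def by linarith
qed

lemma cost_shift: assumes vc: "validc c" and ad: "adjc c c'" and ph: "PR a b h" and ph': "PR a b h'"
  and ch: "cen h = c" and ch': "cen h' = c'" and lv: "\<forall>u. u \<noteq> 0 \<longrightarrow> u \<noteq> 1 \<longrightarrow> h u = h' u"
  shows "Cost a b g h (c # c' # r) = Suc (Cost a b g h' (c' # r))"
proof -
  have P: "\<forall>v. v \<le> a+b+1 \<longrightarrow> h v < 3" "\<forall>v. 2 \<le> v \<and> v \<le> a+1 \<longrightarrow> h v \<noteq> h 0" "\<forall>v. a+2 \<le> v \<and> v \<le> a+b+1 \<longrightarrow> h v \<noteq> h 1"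
    using properD[OF ph] by blast+
  have P': "\<forall>v. 2 \<le> v \<and> v \<le> a+1 \<longrightarrow> h' v \<noteq> h' 0" "\<forall>v. a+2 \<le> v \<and> v \<le> a+b+1 \<longrightarrow> h' v \<noteq> h' 1"
    using properD[OF ph'] by blast+
  have hc: "fst c = h 0" "snd c = h 1" "fst c' = h' 0" "snd c' = h' 1" using ch ch' by (auto simp: cen_def)
  have sA: "(\<Sum>u\<in>AA a. lcA (c # c' # r) (h u) (g u)) = (\<Sum>u\<in>AA a. lcA (c' # r) (h' u) (g u))"
  proof (rule sum.cong)
    fix u assume u: "u \<in> AA a"
    then have "h u = h' u" using lv by auto
    have u3: "h u < 3" "h u \<noteq> fst c" "h u \<noteq> fst c'"
        using u P(1) apply simp
       using u P(2) hc apply simp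
      using u P'(1) hc \<open>h u = h' u\<close> by simp
    have "lcA (c # c' # r) (h u) (g u) = lcA (c' # r) (h u) (g u)"
      by (rule lcA_skip[OF vc ad u3])
    moreover note \<open>h u = h' u\<close>
    ultimately show "lcA (c # c' # r) (h u) (g u) = lcA (c' # r) (h' u) (g u)" by simp
  qed simp
  have sB: "(\<Sum>u\<in>BB a b. lcB (c # c' # r) (h u) (g u)) = (\<Sum>u\<in>BB a b. lcB (c' # r) (h' u) (g u))"
  proof (rule sum.cong)
    fix u assume u: "u \<in> BB a b"
    then have "h u = h' u" using lv by auto
    have u3: "h u < 3" "h u \<noteq> snd c" "h u \<noteq> snd c'"
        using u P(1) apply simp
       using u P(3) hc apply simp
      using u P'(2) hc \<open>h u = h' u\<close> by simp
    have "lcB (c # c' # r) (h u) (g u) = lcB (c' # r) (h u) (g u)"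
      by (rule lcB_skip[OF vc ad u3])
    moreover note \<open>h u = h' u\<close>
    ultimately show "lcB (c # c' # r) (h u) (g u) = lcB (c' # r) (h' u) (g u)" by simp
  qed simp
  show ?thesis unfolding Cost_def sA sB by simp
qed

lemma cost_T: assumes lv: "\<forall>u. u \<noteq> 0 \<longrightarrow> u \<noteq> 1 \<longrightarrow> h u = h' u" and ne: "cs \<noteq> []"
  shows "Cost a b g h [T] \<le> Cost a b g h' cs"
proof -
  have sA: "(\<Sum>u\<in>AA a. lcA [T] (h u) (g u)) \<le> (\<Sum>u\<in>AA a. lcA cs (h' u) (g u))"
    by (rule sum_mono) (use lv lcA_ge[OF ne] in auto)
  have sB: "(\<Sum>u\<in>BB a b. lcB [T] (h u) (g u)) \<le> (\<Sum>u\<in>BB a b. lcB cs (h' u) (g u))"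
    by (rule sum_mono) (use lv lcB_ge[OF ne] in auto)
  show ?thesis using sA sB unfolding Cost_def by simp
qed

lemma pnonempty: "validc c \<Longrightarrow> validc T \<Longrightarrow> pN c T = c # tl (pN c T) \<and> pP c T = c # tl (pP c T)"
  using pN_props[of c T] pP_props[of c T] by (metis cw.simps(1) list.collapse)

lemma lip: assumes pg: "PR a b g" and adj: "col_adj (dstar_V a b) (dstar_E a b) h h'"
  shows "Phi a b g h \<le> Suc (Phi a b g h')"
proof -
  have ph: "PR a b h" and ph': "PR a b h'" and c1: "card {u\<in>dstar_V a b. h u \<noteq> h' u} = 1"
    using adj unfolding col_adj_def by auto
  from c1 obtain v where vset: "{u\<in>dstar_V a b. h u \<noteq> h' u} = {v}" by (rule card_1_singletonE)
  have hv: "h v \<noteq> h' v" using vset by blast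
  have eq: "\<forall>u. u \<noteq> v \<longrightarrow> h u = h' u"
  proof (intro allI impI)
    fix u assume "u \<noteq> v"
    show "h u = h' u"
    proof (cases "u \<in> dstar_V a b")
      case True then show ?thesis using vset \<open>u \<noteq> v\<close> by blast
    next
      case False then have "a+b+1 < u" by (auto simp: dstar_V_def)
      then show ?thesis using properD(2)[OF ph] properD(2)[OF ph'] by simp
    qed
  qed
  define T where "T = cen g"
  define c where "c = cen h"
  define c' where "c' = cen h'"
  have vT: "validc T" "validc c" "validc c'" using cen_valid pg ph ph' by (auto simp: T_def c_def c'_def)
  show ?thesis
  proof (cases "v = 0 \<or> v = 1")
    case False
    then have "cen h = cen h'" using eq by (auto simp: cen_def)
    then have X: "Cost a b g h (pN (cen h) (cen g)) \<le> Suc (Cost a b g h' (pN (cen h') (cen g)))"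
      "Cost a b g h (pP (cen h) (cen g)) \<le> Suc (Cost a b g h' (pP (cen h') (cen g)))"
      using cost_leaf[OF eq] by simp_all
    then show ?thesis unfolding Phi_def by (simp add: min_def)
  next
    case True
    have lv: "\<forall>u. u \<noteq> 0 \<longrightarrow> u \<noteq> 1 \<longrightarrow> h u = h' u" using eq True by auto
    have lv': "\<forall>u. u \<noteq> 0 \<longrightarrow> u \<noteq> 1 \<longrightarrow> h' u = h u" using lv by auto
    have mv: "(fst c' \<noteq> fst c \<and> snd c' = snd c) \<or> (fst c' = fst c \<and> snd c' \<noteq> snd c)"
      using True eq hv by (auto simp: c_def c'_def cen_def)
    have ad: "adjc c c'" by (rule move_adjc[OF vT(2,3) mv])
    have ad': "adjc c' c" by (rule move_adjc[OF vT(3,2)]) (use mv in auto)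
    have key: "Phi a b g h \<le> Suc (Cost a b g h' (pN c' T)) \<and> Phi a b g h \<le> Suc (Cost a b g h' (pP c' T))"
    proof (cases "c = T")
      case True
      have "Phi a b g h \<le> Cost a b g h (pN c T)" unfolding Phi_def c_def T_def by simp
      also have "\<dots> = Cost a b g h [T]" using True pN_same by simp
      finally have p: "Phi a b g h \<le> Cost a b g h [T]" .
      have "Cost a b g h [T] \<le> Cost a b g h' (pN c' T)" "Cost a b g h [T] \<le> Cost a b g h' (pP c' T)"
        using cost_T[OF lv] pnonempty[OF vT(3) vT(1)] by (metis list.distinct(1))+
      then show ?thesis using p by simp
    next
      case cT: False
      show ?thesis
      proof (cases "c' = nxt c")
        case True
        have A: "Cost a b g h (pN c T) = Suc (Cost a b g h' (pN c' T))"
        proof -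
          have "pN c T = c # pN c' T" using pN_step[OF vT(2,1) cT] True by simp
          also have "\<dots> = c # c' # tl (pN c' T)" using pnonempty[OF vT(3,1)] by metis
          finally show ?thesis using cost_shift[OF vT(2) ad ph ph' c_def[symmetric] c'_def[symmetric] lv]
            pnonempty[OF vT(3,1)] by metis
        qed
        have pA: "Phi a b g h \<le> Suc (Cost a b g h' (pN c' T))" using A unfolding Phi_def c_def T_def by simp
        have "Phi a b g h \<le> Suc (Cost a b g h' (pP c' T))"
        proof (cases "c' = T")
          case True then show ?thesis using pA pN_same pP_same by metis
        next
          case False
          have pc: "prv c' = c" using nxt_valid[OF vT(2)] True by simp
          have "pP c' T = c' # pP c T" using pP_step[OF vT(3,1) False] pc by simp
          also have "\<dots> = c' # c # tl (pP c T)" using pnonempty[OF vT(2,1)] by metis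
          finally have "Cost a b g h' (pP c' T) = Suc (Cost a b g h (pP c T))"
            using cost_shift[OF vT(3) ad' ph' ph c'_def[symmetric] c_def[symmetric] lv']
              pnonempty[OF vT(2,1)] by metis
          moreover have "Phi a b g h \<le> Cost a b g h (pP c T)" unfolding Phi_def c_def T_def by simp
          ultimately show ?thesis by simp
        qed
        then show ?thesis using pA by simp
      next
        case False
        then have True': "c' = prv c" using ad unfolding adjc_def by simp
        have A: "Cost a b g h (pP c T) = Suc (Cost a b g h' (pP c' T))"
        proof -
          have "pP c T = c # pP c' T" using pP_step[OF vT(2,1) cT] True' by simp
          also have "\<dots> = c # c' # tl (pP c' T)" using pnonempty[OF vT(3,1)] by metis
          finally show ?thesis using cost_shift[OF vT(2) ad ph ph' c_def[symmetric] c'_def[symmetric] lv]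
            pnonempty[OF vT(3,1)] by metis
        qed
        have pA: "Phi a b g h \<le> Suc (Cost a b g h' (pP c' T))" using A unfolding Phi_def c_def T_def by simp
        have "Phi a b g h \<le> Suc (Cost a b g h' (pN c' T))"
        proof (cases "c' = T")
          case True then show ?thesis using pA pN_same pP_same by metis
        next
          case False
          have pc: "nxt c' = c" using prv_valid[OF vT(2)] True' by simp
          have "pN c' T = c' # pN c T" using pN_step[OF vT(3,1) False] pc by simp
          also have "\<dots> = c' # c # tl (pN c T)" using pnonempty[OF vT(2,1)] by metis
          finally have "Cost a b g h' (pN c' T) = Suc (Cost a b g h (pN c T))"
            using cost_shift[OF vT(3) ad' ph' ph c'_def[symmetric] c_def[symmetric] lv']
              pnonempty[OF vT(2,1)] by metis
          moreover have "Phi a b g h \<le> Cost a b g h (pN c T)" unfolding Phi_def c_def T_def by simp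
          ultimately show ?thesis by simp
        qed
        then show ?thesis using pA by simp
      qed
    qed
    then show ?thesis unfolding Phi_def[of a b g h'] c'_def T_def by (auto simp: min_def)
  qed
qed

end

context fixes a b :: nat begin

lemma walk_tail: assumes w: "col_walk V E (x # ps)" and ne: "ps \<noteq> []"
  shows "col_walk V E ps \<and> col_adj V E x (hd ps)"
proof
  have A: "\<forall>i. Suc i < length (x # ps) \<longrightarrow> col_adj V E ((x # ps) ! i) ((x # ps) ! Suc i)"
    and B: "\<forall>p\<in>set (x # ps). proper_3col V E p" using w unfolding col_walk_def by auto
  show "col_walk V E ps" unfolding col_walk_def
  proof (intro conjI allI impI)
    show "ps \<noteq> []" by (rule ne)
    fix i assume "Suc i < length ps"
    then show "col_adj V E (ps ! i) (ps ! Suc i)" using A[rule_format, of "Suc i"] by simp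
  next
    show "\<forall>p\<in>set ps. proper_3col V E p" using B by simp
  qed
  show "col_adj V E x (hd ps)" using A[rule_format, of 0] ne by (cases ps) auto
qed

lemma Phi_self: "Phi a b g g = 0"
  unfolding Phi_def pN_same Cost_def by simp

lemma walk_bound: assumes pg: "PR a b g"
  shows "\<forall>ps. length ps = Suc k \<longrightarrow> col_walk (dstar_V a b) (dstar_E a b) ps \<longrightarrow> Phi a b g (hd ps) \<le> k + Phi a b g (last ps)"
proof (induction k)
  case 0 then show ?case by (auto simp: length_Suc_conv)
next
  case (Suc k)
  show ?case
  proof (intro allI impI)
    fix ps :: "(nat \<Rightarrow> nat) list" assume l: "length ps = Suc (Suc k)" and w: "col_walk (dstar_V a b) (dstar_E a b) ps"
    then obtain x ps' where ps: "ps = x # ps'" and l': "length ps' = Suc k" by (auto simp: length_Suc_conv)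
    then have ne: "ps' \<noteq> []" by auto
    from walk_tail[OF w[unfolded ps] ne] have w': "col_walk (dstar_V a b) (dstar_E a b) ps'"
      and ad: "col_adj (dstar_V a b) (dstar_E a b) x (hd ps')" by auto
    have "Phi a b g x \<le> Suc (Phi a b g (hd ps'))" by (rule lip[OF pg ad])
    moreover have "Phi a b g (hd ps') \<le> k + Phi a b g (last ps')" using Suc.IH l' w' by blast
    ultimately show "Phi a b g (hd ps) \<le> Suc k + Phi a b g (last ps)" using ps ne by simp
  qed
qed

lemma dist_lower: assumes pg: "PR a b g"
  shows "enat (Phi a b g f) \<le> col_dist (dstar_V a b) (dstar_E a b) f g"
  unfolding col_dist_def
proof (rule INF_greatest)
  fix ps assume "ps \<in> {ps. col_walk (dstar_V a b) (dstar_E a b) ps \<and> hd ps = f \<and> last ps = g}"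
  then have w: "col_walk (dstar_V a b) (dstar_E a b) ps" and h: "hd ps = f" and l: "last ps = g" by auto
  have ne: "ps \<noteq> []" using w unfolding col_walk_def by simp
  then have len: "length ps = Suc (length ps - 1)" by simp
  have "Phi a b g f \<le> (length ps - 1) + Phi a b g g"
    using walk_bound[OF pg, of "length ps - 1"] len w h l by metis
  then show "enat (Phi a b g f) \<le> enat (length ps - 1)" using Phi_self by simp
qed

lemma dist_upper_cs: "PR a b f \<Longrightarrow> PR a b g \<Longrightarrow> cw cs \<Longrightarrow> hd cs = cen f \<Longrightarrow> last cs = cen g \<Longrightarrow>
   col_dist (dstar_V a b) (dstar_E a b) f g \<le> enat (Cost a b g f cs)"
  using realize[of cs a b f g] dist_le by (meson enat_ord_simps(1) order_trans)

lemma card_AA: "card (AA a) = a" by simp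
lemma card_BB: "card (BB a b) = b" by simp

lemma lc_one: "lcA [c] s t \<le> 1" "lcB [c] s t \<le> 1" by auto
lemma lc_two: "lcA [c, d] s t \<le> 2" "lcB [c, d] s t \<le> 2" by auto
lemma lc_two1: "fst c = fst d \<Longrightarrow> lcA [c, d] s t \<le> 1" "snd c = snd d \<Longrightarrow> lcB [c, d] s t \<le> 1" by auto

lemma cost_one_step: assumes "validc c" "adjc c d"
  shows "Cost a b g f [c, d] \<le> 1 + 2 * a + b \<or> Cost a b g f [c, d] \<le> 1 + a + 2 * b"
proof -
  from adjc_cases[OF assms] have mv: "(fst d \<noteq> fst c \<and> snd d = snd c) \<or> (fst d = fst c \<and> snd d \<noteq> snd c)" by simp
  have A2: "(\<Sum>u\<in>AA a. lcA [c,d] (f u) (g u)) \<le> 2 * a" using sum_bounded_above[of "AA a" "\<lambda>u. lcA [c,d] (f u) (g u)" 2] lc_two by simp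
  have B2: "(\<Sum>u\<in>BB a b. lcB [c,d] (f u) (g u)) \<le> 2 * b" using sum_bounded_above[of "BB a b" "\<lambda>u. lcB [c,d] (f u) (g u)" 2] lc_two by simp
  from mv show ?thesis
  proof
    assume "fst d \<noteq> fst c \<and> snd d = snd c"
    then have "(\<Sum>u\<in>BB a b. lcB [c,d] (f u) (g u)) \<le> b"
      using sum_bounded_above[of "BB a b" "\<lambda>u. lcB [c,d] (f u) (g u)" 1] lc_two1(2)[of c d] by simp
    then show ?thesis using A2 unfolding Cost_def by simp
  next
    assume "fst d = fst c \<and> snd d \<noteq> snd c"
    then have "(\<Sum>u\<in>AA a. lcA [c,d] (f u) (g u)) \<le> a"
      using sum_bounded_above[of "AA a" "\<lambda>u. lcA [c,d] (f u) (g u)" 1] lc_two1(1)[of c d] by simp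
    then show ?thesis using B2 unfolding Cost_def by simp
  qed
qed

lemma dist_upper: assumes pf: "PR a b f" and pg: "PR a b g" and ab: "a \<le> b + 4" "b \<le> a + 4"
  shows "col_dist (dstar_V a b) (dstar_E a b) f g \<le> enat ((3 * (a + b + 2)) div 2)"
proof -
  define c where "c = cen f"
  define T where "T = cen g"
  have vc: "validc c" "validc T" using cen_valid pf pg by (auto simp: c_def T_def)
  have dN: "col_dist (dstar_V a b) (dstar_E a b) f g \<le> enat (Cost a b g f (pN c T))"
    using dist_upper_cs[OF pf pg] pN_props[OF vc] by (simp add: c_def T_def)
  have dP: "col_dist (dstar_V a b) (dstar_E a b) f g \<le> enat (Cost a b g f (pP c T))"
    using dist_upper_cs[OF pf pg] pP_props[OF vc] by (simp add: c_def T_def)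
  have "Cost a b g f (pN c T) \<le> (3 * (a + b + 2)) div 2 \<or> Cost a b g f (pP c T) \<le> (3 * (a + b + 2)) div 2"
  proof (cases "c = T")
    case True
    have A1: "(\<Sum>u\<in>AA a. lcA [T] (f u) (g u)) \<le> a" using sum_bounded_above[of "AA a" "\<lambda>u. lcA [T] (f u) (g u)" 1] lc_one by simp
    have B1: "(\<Sum>u\<in>BB a b. lcB [T] (f u) (g u)) \<le> b" using sum_bounded_above[of "BB a b" "\<lambda>u. lcB [T] (f u) (g u)" 1] lc_one by simp
    have "Cost a b g f (pN c T) \<le> a + b" using A1 B1 True pN_same unfolding Cost_def by simp
    moreover have "a + b \<le> (3 * (a + b + 2)) div 2" by presburger
    ultimately show ?thesis by linarith
  next
    case cT: False
    show ?thesis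
    proof (cases "nxt c = T")
      case True
      then have "pN c T = [c, T]" using ub1N[OF vc cT] by simp
      moreover have "adjc c T" using True by (simp add: adjc_def)
      ultimately have "Cost a b g f (pN c T) \<le> 1 + 2 * a + b \<or> Cost a b g f (pN c T) \<le> 1 + a + 2 * b"
        using cost_one_step[OF vc(1)] by simp
      then show ?thesis using ab by auto
    next
      case nT: False
      show ?thesis
      proof (cases "prv c = T")
        case True
        then have "pP c T = [c, T]" using ub1P[OF vc cT] by simp
        moreover have "adjc c T" using True by (simp add: adjc_def)
        ultimately have "Cost a b g f (pP c T) \<le> 1 + 2 * a + b \<or> Cost a b g f (pP c T) \<le> 1 + a + 2 * b"
          using cost_one_step[OF vc(1)] by simp
        then show ?thesis using ab by auto
      next
        case pT: False
        have fc: "fst c = f 0" "snd c = f 1" "fst T = g 0" "snd T = g 1" by (auto simp: c_def T_def cen_def)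
        have PF: "\<forall>v. v \<le> a+b+1 \<longrightarrow> f v < 3" "\<forall>v. 2 \<le> v \<and> v \<le> a+1 \<longrightarrow> f v \<noteq> f 0" "\<forall>v. a+2 \<le> v \<and> v \<le> a+b+1 \<longrightarrow> f v \<noteq> f 1"
          using properD[OF pf] by blast+
        have PG: "\<forall>v. v \<le> a+b+1 \<longrightarrow> g v < 3" "\<forall>v. 2 \<le> v \<and> v \<le> a+1 \<longrightarrow> g v \<noteq> g 0" "\<forall>v. a+2 \<le> v \<and> v \<le> a+b+1 \<longrightarrow> g v \<noteq> g 1"
          using properD[OF pg] by blast+
        have A3: "(\<Sum>u\<in>AA a. lcA (pN c T) (f u) (g u) + lcA (pP c T) (f u) (g u)) \<le> 3 * a"
        proof -
          have "\<And>u. u \<in> AA a \<Longrightarrow> lcA (pN c T) (f u) (g u) + lcA (pP c T) (f u) (g u) \<le> 3"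
          proof -
            fix u assume u: "u \<in> AA a"
            have "f u < 3" "g u < 3" "f u \<noteq> fst c" "g u \<noteq> fst T" using u PF PG fc by auto
            then show "lcA (pN c T) (f u) (g u) + lcA (pP c T) (f u) (g u) \<le> 3" using ub3[OF vc cT nT pT] by blast
          qed
          then show ?thesis using sum_bounded_above[of "AA a" "\<lambda>u. lcA (pN c T) (f u) (g u) + lcA (pP c T) (f u) (g u)" 3] by simp
        qed
        have B3: "(\<Sum>u\<in>BB a b. lcB (pN c T) (f u) (g u) + lcB (pP c T) (f u) (g u)) \<le> 3 * b"
        proof -
          have "\<And>u. u \<in> BB a b \<Longrightarrow> lcB (pN c T) (f u) (g u) + lcB (pP c T) (f u) (g u) \<le> 3"
          proof -
            fix u assume u: "u \<in> BB a b"
            have "f u < 3" "g u < 3" "f u \<noteq> snd c" "g u \<noteq> snd T" using u PF PG fc by auto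
            then show "lcB (pN c T) (f u) (g u) + lcB (pP c T) (f u) (g u) \<le> 3" using ub3B[OF vc cT nT pT] by blast
          qed
          then show ?thesis using sum_bounded_above[of "BB a b" "\<lambda>u. lcB (pN c T) (f u) (g u) + lcB (pP c T) (f u) (g u)" 3] by simp
        qed
        have len: "length (pN c T) + length (pP c T) = 8" by (rule ub3len[OF vc cT nT pT])
        have "Cost a b g f (pN c T) + Cost a b g f (pP c T) \<le> 6 + 3 * a + 3 * b"
        proof -
          have l1: "length (pN c T) \<ge> 1" "length (pP c T) \<ge> 1" using pnonempty[OF vc] by (metis One_nat_def Suc_le_eq length_Cons zero_less_Suc)+
          show ?thesis using A3 B3 len l1 unfolding Cost_def sum.distrib by linarith
        qed
        then show ?thesis by presburger
      qed
    qed
  qed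
  then show ?thesis using dN dP by (meson enat_ord_simps(1) order_trans)
qed

end

lemma sum_ind: "K \<le> M \<Longrightarrow> (\<Sum>v\<in>{2..M+1}. if v \<le> K+1 then 1 else 0::nat) = K"
proof -
  assume km: "K \<le> M"
  have "(\<Sum>v\<in>{2..M+1}. if v \<le> K+1 then 1 else 0::nat) = card {v\<in>{2..M+1}. v \<le> K+1}"
    by (rule card_sum_ind[symmetric]) simp
  also have "{v\<in>{2..M+1}. v \<le> K+1} = {2..K+1}" using km by auto
  finally show ?thesis by simp
qed

lemma sum_w1: assumes "K \<le> M"
  shows "(\<Sum>v\<in>{2..M+1}. if v \<le> K+1 then 2 else 1::nat) = M + K"
proof -
  have "(\<Sum>v\<in>{2..M+1}. if v \<le> K+1 then 2 else 1::nat) = (\<Sum>v\<in>{2..M+1}. 1 + (if v \<le> K+1 then 1 else 0))"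
    by (rule sum.cong) auto
  also have "\<dots> = (\<Sum>v\<in>{2..M+1}. 1) + (\<Sum>v\<in>{2..M+1}. if v \<le> K+1 then 1 else 0)"
    by (rule sum.distrib)
  also have "(\<Sum>v\<in>{2..M+1}. 1::nat) = M" by simp
  finally show ?thesis using sum_ind[OF assms] by simp
qed

lemma sum_w2: assumes "K \<le> M"
  shows "(\<Sum>v\<in>{2..M+1}. if v \<le> K+1 then 1 else 2::nat) + K = 2 * M"
proof -
  have "(\<Sum>v\<in>{2..M+1}. if v \<le> K+1 then 1 else 2::nat) + (\<Sum>v\<in>{2..M+1}. if v \<le> K+1 then 1 else 0)
      = (\<Sum>v\<in>{2..M+1}. (if v \<le> K+1 then 1 else 2::nat) + (if v \<le> K+1 then 1 else 0))"
    by (rule sum.distrib[symmetric])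
  also have "\<dots> = (\<Sum>v\<in>{2..M+1}. 2::nat)" by (rule sum.cong) auto
  also have "\<dots> = 2 * M" by simp
  finally show ?thesis using sum_ind[OF assms] by simp
qed

lemma split_sum: fixes a b :: nat and F :: "nat \<Rightarrow> nat" shows "(\<Sum>v\<in>{2..a+1}. F v) + (\<Sum>v\<in>{a+2..a+b+1}. F v) = (\<Sum>v\<in>{2..(a+b)+1}. F v)"
proof -
  have "{2..(a+b)+1} = {2..a+1} \<union> {a+2..a+b+1}" by auto
  moreover have "{2..a+1} \<inter> {a+2..a+b+1} = {}" by auto
  ultimately show ?thesis by (simp add: sum.union_disjoint)
qed

lemma pN_ex: "pN (0,1) (1,2) = [(0,1),(0,2),(1,2)]" by (simp add: fin_simps)
lemma pP_ex: "pP (0,1) (1,2) = [(0,1),(2,1),(2,0),(1,0),(1,2)]" by (simp add: fin_simps)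

lemma lower_pair: assumes a1: "a \<ge> 1" and b1: "b \<ge> 1"
  shows "\<exists>f g. PR a b f \<and> PR a b g \<and> (3 * (a + b + 2)) div 2 \<le> Phi a b g f"
proof -
  define m where "m = a + b"
  define k where "k = 1 + m div 2"
  have km: "k \<le> m" using a1 b1 unfolding k_def m_def by presburger
  define f where "f = (\<lambda>v::nat. if v = 0 then 0 else if v = 1 then 1 else if v \<le> a+1 then 1 else
     if v \<le> a+b+1 then (if v \<le> k+1 then 2 else 0) else (0::nat))"
  define g where "g = (\<lambda>v::nat. if v = 0 then 1 else if v = 1 then 2 else if v \<le> a+1 then (if v \<le> k+1 then 0 else 2) else
     if v \<le> a+b+1 then 1 else (0::nat))"
  have pf: "PR a b f" by (rule proper_intro) (auto simp: f_def)
  have pg: "PR a b g" by (rule proper_intro) (auto simp: g_def)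
  have cf: "cen f = (0,1)" and cg: "cen g = (1,2)" by (auto simp: cen_def f_def g_def)
  define w1 where "w1 = (\<lambda>v::nat. if v \<le> k+1 then 2 else 1::nat)"
  define w2 where "w2 = (\<lambda>v::nat. if v \<le> k+1 then 1 else 2::nat)"
  have NA: "(\<Sum>v\<in>{2..a+1}. lcA [(0,1),(0,2),(1,2)] (f v) (g v)) = (\<Sum>v\<in>{2..a+1}. w1 v)"
    by (rule sum.cong) (auto simp: f_def g_def w1_def)
  have NB: "(\<Sum>v\<in>{a+2..a+b+1}. lcB [(0,1),(0,2),(1,2)] (f v) (g v)) = (\<Sum>v\<in>{a+2..a+b+1}. w1 v)"
    by (rule sum.cong) (auto simp: f_def g_def w1_def)
  have PA: "(\<Sum>v\<in>{2..a+1}. lcA [(0,1),(2,1),(2,0),(1,0),(1,2)] (f v) (g v)) = (\<Sum>v\<in>{2..a+1}. w2 v)"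
    by (rule sum.cong) (auto simp: f_def g_def w2_def)
  have PB: "(\<Sum>v\<in>{a+2..a+b+1}. lcB [(0,1),(2,1),(2,0),(1,0),(1,2)] (f v) (g v)) = (\<Sum>v\<in>{a+2..a+b+1}. w2 v)"
    by (rule sum.cong) (auto simp: f_def g_def w2_def)
  have CN: "Cost a b g f (pN (cen f) (cen g)) = 2 + m + k"
  proof -
    have "Cost a b g f (pN (cen f) (cen g)) = 2 + ((\<Sum>v\<in>{2..a+1}. w1 v) + (\<Sum>v\<in>{a+2..a+b+1}. w1 v))"
      unfolding Cost_def cf cg pN_ex NA NB by simp
    also have "\<dots> = 2 + (\<Sum>v\<in>{2..m+1}. w1 v)" unfolding split_sum m_def ..
    also have "\<dots> = 2 + m + k" using sum_w1[OF km] unfolding w1_def by simp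
    finally show ?thesis .
  qed
  have CP: "Cost a b g f (pP (cen f) (cen g)) + k = 4 + 2 * m"
  proof -
    have "Cost a b g f (pP (cen f) (cen g)) = 4 + ((\<Sum>v\<in>{2..a+1}. w2 v) + (\<Sum>v\<in>{a+2..a+b+1}. w2 v))"
      unfolding Cost_def cf cg pP_ex PA PB by simp
    also have "\<dots> = 4 + (\<Sum>v\<in>{2..m+1}. w2 v)" unfolding split_sum m_def ..
    finally show ?thesis using sum_w2[OF km] unfolding w2_def by simp
  qed
  have bd: "(3 * (a + b + 2)) div 2 = 3 + m + m div 2" unfolding m_def by presburger
  have "m div 2 + m div 2 \<le> m" by presburger
  then have "(3 * (a + b + 2)) div 2 \<le> Cost a b g f (pN (cen f) (cen g))"
    "(3 * (a + b + 2)) div 2 \<le> Cost a b g f (pP (cen f) (cen g))"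
    using CN CP bd unfolding k_def by linarith+
  then have "(3 * (a + b + 2)) div 2 \<le> Phi a b g f"
    unfolding Phi_def by simp
  then show ?thesis using pf pg by blast
qed

theorem mainTheorem18:
  fixes a b n :: nat
  assumes "a \<ge> 1" and "b \<ge> 1" and "\<bar>int a - int b\<bar> \<le> 4" and "n = a + b + 2"
  shows "col_diam (dstar_V a b) (dstar_E a b) = enat ((3 * n) div 2)"
proof (rule antisym)
  have ab: "a \<le> b + 4" "b \<le> a + 4" using assms(3) by auto
  show "col_diam (dstar_V a b) (dstar_E a b) \<le> enat ((3 * n) div 2)"
    unfolding col_diam_def
  proof (rule SUP_least)
    fix p assume "p \<in> {(f, g). PR a b f \<and> PR a b g}"
    then show "col_dist (dstar_V a b) (dstar_E a b) (fst p) (snd p) \<le> enat ((3 * n) div 2)"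
      using dist_upper[OF _ _ ab] assms(4) by auto
  qed
next
  obtain f g where fg: "PR a b f" "PR a b g" "(3 * (a + b + 2)) div 2 \<le> Phi a b g f"
    using lower_pair[OF assms(1,2)] by blast
  have "enat ((3 * n) div 2) \<le> col_dist (dstar_V a b) (dstar_E a b) f g"
    using dist_lower[OF fg(2), of f] fg(3) assms(4) by (meson enat_ord_simps(1) order_trans)
  also have "\<dots> \<le> col_diam (dstar_V a b) (dstar_E a b)"
    unfolding col_diam_def by (rule SUP_upper2[of "(f, g)"]) (use fg in auto)
  finally show "enat ((3 * n) div 2) \<le> col_diam (dstar_V a b) (dstar_E a b)" .
qed

end
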